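(* In Smoluchowski's discrete model (defined in the context), for every $t\ge0$, every $S\subset[N]$ with $\mathbb{P}(S(t)=S)>0$ and every graph $G$ on vertex set $S$, \[ \mathbb{P}(C(t)=G\mid S(t)=S)=\mathbb{P}\big(ER_S(p^{(N)}_t)=G\ \big|\ ER_S(p^{(N)}_t)\text{ has no component of size}\ge\alpha(N)\big), \] i.e. conditionally on $S(t)$, the configuration on $S(t)$ is an Erdős–Rényi graph on $S(t)$ with edge probability $p^{(N)}_t$ conditioned on having no connected component with at least $\alpha(N)$ vertices.
   Context: Smoluchowski's discrete model: $N\ge2$, $(\alpha(N))$ with $\alpha(N)\to\infty$, $\alpha(N)/N\to0$. Particles $[N]$; each unordered pair $\{i,j\}$ has an independent exponential clock $e_{ij}$ of parameter $1/N$; initially no links. When $e_{ij}$ rings, the link is created unless $i$ or $j$ belongs at that moment to a cluster (connected component of created links) of size $\ge\alpha(N)$, in which case it is never created. $S(t)$ is the set of particles in clusters of size $<\alpha(N)$ at time $t$; $C(t)$ is the graph on $S(t)$ with edges $\{i,j\}\subset S(t)$, $e_{ij}\le t$. $p^{(N)}_t=1-e^{-t/N}$. $ER_S(p)$ is the random graph on vertex set $S$ where each edge is present independently with probability $p$. *)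

theory Defs
  imports "HOL-Probability.Probability"
begin

text \<open>Unordered pairs {i,j} of particles in [N] = {1..N} are encoded as ordered pairs (i,j), i < j.\<close>
definition Pairs :: "nat \<Rightarrow> (nat \<times> nat) set" where
  "Pairs N = {(i,j). 1 \<le> i \<and> i < j \<and> j \<le> N}"

definition SPairs :: "nat set \<Rightarrow> (nat \<times> nat) set" where
  "SPairs S = {(i,j). i \<in> S \<and> j \<in> S \<and> i < j}"

definition comp :: "(nat \<times> nat) set \<Rightarrow> nat \<Rightarrow> nat set" where
  "comp E i = {j. (i,j) \<in> (E \<union> E\<inverse>)\<^sup>*}"

definition clocks :: "nat \<Rightarrow> ((nat \<times> nat) \<Rightarrow> real) measure" where
  "clocks N = PiM (Pairs N) (\<lambda>_. density lborel (exponential_density (1 / real N)))"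

text \<open>All links ever created, for a clock realisation e and threshold a = alpha(N):
  link p is created iff, at its ringing time, both endpoints lie in clusters of size < a
  of the graph formed by the links created strictly earlier.
  (This recursion is on strictly earlier ringing times, so the set is unique.)\<close>
definition links :: "nat \<Rightarrow> real \<Rightarrow> ((nat \<times> nat) \<Rightarrow> real) \<Rightarrow> (nat \<times> nat) set" where
  "links N a e = (THE L. L \<subseteq> Pairs N \<and>
     (\<forall>p\<in>Pairs N. p \<in> L \<longleftrightarrow>
        (real (card (comp {q\<in>L. e q < e p} (fst p))) < a \<and>
         real (card (comp {q\<in>L. e q < e p} (snd p))) < a)))"

definition links_at :: "nat \<Rightarrow> real \<Rightarrow> ((nat \<times> nat) \<Rightarrow> real) \<Rightarrow> real \<Rightarrow> (nat \<times> nat) set" where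
  "links_at N a e t = {p \<in> links N a e. e p \<le> t}"

definition Sset :: "nat \<Rightarrow> real \<Rightarrow> ((nat \<times> nat) \<Rightarrow> real) \<Rightarrow> real \<Rightarrow> nat set" where
  "Sset N a e t = {i \<in> {1..N}. real (card (comp (links_at N a e t) i)) < a}"

definition Cgraph :: "nat \<Rightarrow> real \<Rightarrow> ((nat \<times> nat) \<Rightarrow> real) \<Rightarrow> real \<Rightarrow> (nat \<times> nat) set" where
  "Cgraph N a e t = {p \<in> SPairs (Sset N a e t). e p \<le> t}"

definition ER :: "nat set \<Rightarrow> real \<Rightarrow> (nat \<times> nat) set pmf" where
  "ER S p = map_pmf (\<lambda>f. {x \<in> SPairs S. f x}) (Pi_pmf (SPairs S) False (\<lambda>_. bernoulli_pmf p))"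

definition no_big_comp :: "nat set \<Rightarrow> real \<Rightarrow> (nat \<times> nat) set \<Rightarrow> bool" where
  "no_big_comp S a H \<longleftrightarrow> (\<forall>i\<in>S. real (card (comp H i)) < a)"

definition pN :: "nat \<Rightarrow> real \<Rightarrow> real" where
  "pN N t = 1 - exp (- t / real N)"

end

theory Submission
  imports Defs
begin


lemma comp_self: "i \<in> comp E i"
  by (simp add: comp_def)

lemma comp_mono: "E \<subseteq> F \<Longrightarrow> comp E i \<subseteq> comp F i"
  unfolding comp_def by (auto intro: rtrancl_mono[THEN subsetD, rotated])

lemma comp_finite: assumes "finite E" shows "finite (comp E i)"
proof -
  have "comp E i \<subseteq> insert i (fst ` E \<union> snd ` E)"
  proof
    fix j assume "j \<in> comp E i"
    then have "(i,j) \<in> (E \<union> E\<inverse>)\<^sup>*" by (simp add: comp_def)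
    then show "j \<in> insert i (fst ` E \<union> snd ` E)"
      by (cases rule: rtranclE) force+
  qed
  moreover have "finite (insert i (fst ` E \<union> snd ` E))" using assms by simp
  ultimately show ?thesis by (rule finite_subset)
qed

lemma comp_sym_eq: assumes "j \<in> comp E i" shows "comp E j = comp E i"
proof -
  have sym: "sym ((E \<union> E\<inverse>)\<^sup>*)" by (intro sym_rtrancl) (auto simp: sym_def)
  have ij: "(i,j) \<in> (E \<union> E\<inverse>)\<^sup>*" using assms by (simp add: comp_def)
  then have ji: "(j,i) \<in> (E \<union> E\<inverse>)\<^sup>*" using sym by (meson symD)
  show ?thesis unfolding comp_def
    using ij ji by (auto intro: rtrancl_trans)
qed

definition resp :: "(nat \<times> nat) set \<Rightarrow> nat set \<Rightarrow> bool" where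
  "resp E A \<longleftrightarrow> (\<forall>q\<in>E. fst q \<in> A \<longleftrightarrow> snd q \<in> A)"

lemma comp_resp:
  assumes "resp E A"
  shows "comp E i = comp {q\<in>E. fst q \<in> A \<longleftrightarrow> i \<in> A} i"
proof
  show "comp {q\<in>E. fst q \<in> A \<longleftrightarrow> i \<in> A} i \<subseteq> comp E i" by (rule comp_mono) auto
next
  let ?E' = "{q\<in>E. fst q \<in> A \<longleftrightarrow> i \<in> A}"
  have "(i,j) \<in> (E \<union> E\<inverse>)\<^sup>* \<Longrightarrow> (j \<in> A \<longleftrightarrow> i \<in> A) \<and> (i,j) \<in> (?E' \<union> ?E'\<inverse>)\<^sup>*" for j
  proof (induction rule: rtrancl_induct)
    case base then show ?case by simp
  next
    case (step j k)
    have IH1: "j \<in> A \<longleftrightarrow> i \<in> A" and IH2: "(i,j) \<in> (?E' \<union> ?E'\<inverse>)\<^sup>*" using step.IH by auto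
    from step.hyps(2) have "(j,k) \<in> E \<or> (k,j) \<in> E" by auto
    have resp': "q \<in> E \<Longrightarrow> fst q \<in> A \<longleftrightarrow> snd q \<in> A" for q using assms unfolding resp_def by blast
    have kA: "k \<in> A \<longleftrightarrow> j \<in> A"
      using \<open>(j,k) \<in> E \<or> (k,j) \<in> E\<close> resp'[of "(j,k)"] resp'[of "(k,j)"] by auto
    have jk: "(j,k) \<in> ?E' \<union> ?E'\<inverse>"
      using \<open>(j,k) \<in> E \<or> (k,j) \<in> E\<close> resp'[of "(k,j)"] IH1 by auto
    have "(i,k) \<in> (?E' \<union> ?E'\<inverse>)\<^sup>*" using IH2 jk by (rule rtrancl.rtrancl_into_rtrancl)
    then show ?case using kA IH1 by blast
  qed
  then show "comp E i \<subseteq> comp ?E' i" unfolding comp_def by blast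
qed

definition isfix :: "((nat \<times> nat) set \<Rightarrow> nat \<times> nat \<Rightarrow> bool) \<Rightarrow> ((nat \<times> nat) \<Rightarrow> real)
   \<Rightarrow> (nat \<times> nat) set \<Rightarrow> (nat \<times> nat) set \<Rightarrow> bool" where
  "isfix \<Phi> e P L \<longleftrightarrow> L \<subseteq> P \<and> (\<forall>p\<in>P. p \<in> L \<longleftrightarrow> \<Phi> {q\<in>L. e q < e p} p)"

lemma isfix_sub: "isfix \<Phi> e P L \<Longrightarrow> L \<subseteq> P"
  by (simp add: isfix_def)

lemma isfix_iff: "isfix \<Phi> e P L \<Longrightarrow> p \<in> P \<Longrightarrow> p \<in> L \<longleftrightarrow> \<Phi> {q\<in>L. e q < e p} p"
  unfolding isfix_def by blast

lemma isfixI: "L \<subseteq> P \<Longrightarrow> (\<And>p. p \<in> P \<Longrightarrow> p \<in> L \<longleftrightarrow> \<Phi> {q\<in>L. e q < e p} p) \<Longrightarrow> isfix \<Phi> e P L"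
  unfolding isfix_def by blast

lemma isfix_exists:
  assumes "finite P" shows "\<exists>L. isfix \<Phi> e P L"
  using assms
proof (induction "card P" arbitrary: P rule: less_induct)
  case less
  show ?case
  proof (cases "P = {}")
    case True then show ?thesis by (auto simp: isfix_def)
  next
    case False
    define m where "m = Max (e ` P)"
    define P' where "P' = {p\<in>P. e p < m}"
    have mP: "m \<in> e ` P" unfolding m_def using False less.prems by simp
    then obtain p0 where p0: "p0 \<in> P" "e p0 = m" by auto
    have "P' \<subset> P" using p0 by (auto simp: P'_def)
    then have "card P' < card P" using less.prems by (simp add: psubset_card_mono)
    moreover have "finite P'" using less.prems by (simp add: P'_def)
    ultimately obtain L' where L': "isfix \<Phi> e P' L'" using less.hyps by blast
    define L where "L = L' \<union> {p\<in>P. e p = m \<and> \<Phi> L' p}"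
    have le: "p \<in> P \<Longrightarrow> e p \<le> m" for p unfolding m_def using less.prems by simp
    have "isfix \<Phi> e P L"
      unfolding isfix_def
    proof (intro conjI ballI)
      show "L \<subseteq> P" using isfix_sub[OF L'] by (auto simp: L_def P'_def)
    next
      fix p assume p: "p \<in> P"
      show "p \<in> L \<longleftrightarrow> \<Phi> {q\<in>L. e q < e p} p"
      proof (cases "e p < m")
        case True
        have "{q\<in>L. e q < e p} = {q\<in>L'. e q < e p}" using True by (auto simp: L_def)
        moreover have "p \<in> L \<longleftrightarrow> p \<in> L'" using True by (auto simp: L_def)
        moreover have "p \<in> P'" using p True by (simp add: P'_def)
        then have "p \<in> L' \<longleftrightarrow> \<Phi> {q\<in>L'. e q < e p} p" using L' unfolding isfix_def by blast
        ultimately show ?thesis by simp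
      next
        case False
        then have em: "e p = m" using le[OF p] by simp
        have "{q\<in>L. e q < e p} = L'" using isfix_sub[OF L'] em by (auto simp: L_def P'_def)
        moreover have "p \<notin> L'" using isfix_sub[OF L'] em by (auto simp: P'_def)
        ultimately show ?thesis using p em by (auto simp: L_def)
      qed
    qed
    then show ?thesis by blast
  qed
qed

lemma isfix_unique:
  assumes "finite P" "isfix \<Phi> e P L1" "isfix \<Phi> e P L2" shows "L1 = L2"
proof -
  have "\<forall>p\<in>P. card {q\<in>P. e q < e p} = n \<longrightarrow> (p \<in> L1 \<longleftrightarrow> p \<in> L2)" for n
  proof (induction n rule: less_induct)
    case (less n)
    show ?case
    proof (intro ballI impI)
      fix p assume p: "p \<in> P" and n: "card {q\<in>P. e q < e p} = n"
      have "{q\<in>L1. e q < e p} = {q\<in>L2. e q < e p}"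
      proof -
        have "q \<in> L1 \<longleftrightarrow> q \<in> L2" if q: "q \<in> P" "e q < e p" for q
        proof -
          have ps: "{r\<in>P. e r < e q} \<subset> {r\<in>P. e r < e p}" using q by auto
          have fin: "finite {r\<in>P. e r < e p}" using assms(1) by simp
          have "card {r\<in>P. e r < e q} < card {r\<in>P. e r < e p}" by (rule psubset_card_mono[OF fin ps])
          then have "card {r\<in>P. e r < e q} < n" using n by simp
          then show ?thesis using less q by blast
        qed
        then show ?thesis using isfix_sub[OF assms(2)] isfix_sub[OF assms(3)] by blast
      qed
      then show "p \<in> L1 \<longleftrightarrow> p \<in> L2" using isfix_iff[OF assms(2) p] isfix_iff[OF assms(3) p] by (simp only:)
    qed
  qed
  then have "\<forall>p\<in>P. p \<in> L1 \<longleftrightarrow> p \<in> L2" by blast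
  then show ?thesis using isfix_sub[OF assms(2)] isfix_sub[OF assms(3)] by blast
qed

definition Phi :: "real \<Rightarrow> (nat \<times> nat) set \<Rightarrow> nat \<times> nat \<Rightarrow> bool" where
  "Phi a L p \<longleftrightarrow> real (card (comp L (fst p))) < a \<and> real (card (comp L (snd p))) < a"

lemma finite_Pairs: "finite (Pairs N)"
proof -
  have "Pairs N \<subseteq> {1..N} \<times> {1..N}" by (auto simp: Pairs_def)
  then show ?thesis by (rule finite_subset) auto
qed

lemma links_isfix: "isfix (Phi a) e (Pairs N) (links N a e)"
proof -
  have "\<exists>!L. isfix (Phi a) e (Pairs N) L"
    using isfix_exists[OF finite_Pairs] isfix_unique[OF finite_Pairs] by blast
  then have "isfix (Phi a) e (Pairs N) (THE L. isfix (Phi a) e (Pairs N) L)" by (rule theI')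
  moreover have "links N a e = (THE L. isfix (Phi a) e (Pairs N) L)"
    unfolding links_def isfix_def Phi_def by (rule refl)
  ultimately show ?thesis by simp
qed

lemma links_at_isfix: "isfix (Phi a) e {p\<in>Pairs N. e p \<le> t} (links_at N a e t)"
proof -
  have F: "isfix (Phi a) e (Pairs N) (links N a e)" by (rule links_isfix)
  show ?thesis
  proof (rule isfixI)
    show "links_at N a e t \<subseteq> {p \<in> Pairs N. e p \<le> t}"
      using isfix_sub[OF F] by (auto simp: links_at_def)
  next
    fix p assume p: "p \<in> {p \<in> Pairs N. e p \<le> t}"
    have "{q \<in> links_at N a e t. e q < e p} = {q \<in> links N a e. e q < e p}"
      using p by (auto simp: links_at_def)
    moreover have "p \<in> links_at N a e t \<longleftrightarrow> p \<in> links N a e" using p by (simp add: links_at_def)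
    moreover have "p \<in> Pairs N" using p by simp
    then have "p \<in> links N a e \<longleftrightarrow> Phi a {q\<in>links N a e. e q < e p} p" using isfix_iff[OF F] by blast
    ultimately show "p \<in> links_at N a e t \<longleftrightarrow> Phi a {q \<in> links_at N a e t. e q < e p} p"
      by simp
  qed
qed

lemma links_at_unique:
  assumes "isfix (Phi a) e {p\<in>Pairs N. e p \<le> t} L"
  shows "links_at N a e t = L"
proof -
  have "finite {p\<in>Pairs N. e p \<le> t}" using finite_Pairs by simp
  then show ?thesis using isfix_unique[OF _ links_at_isfix assms] by blast
qed



lemma resp_mono: "resp E A \<Longrightarrow> X \<subseteq> E \<Longrightarrow> resp X A"
  by (auto simp: resp_def)

lemma comp_in: "resp X S \<Longrightarrow> v \<in> S \<Longrightarrow> comp X v = comp {q\<in>X. fst q \<in> S} v"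
  using comp_resp[of X S v] by simp

lemma comp_out: "resp X S \<Longrightarrow> v \<notin> S \<Longrightarrow> comp X v = comp {q\<in>X. fst q \<notin> S} v"
  using comp_resp[of X S v] by simp

lemma SPairs_sub: "S \<subseteq> {1..N} \<Longrightarrow> SPairs S \<subseteq> Pairs N"
  by (auto simp: SPairs_def Pairs_def)

lemma finite_SPairs: "S \<subseteq> {1..N} \<Longrightarrow> finite (SPairs S)"
  using finite_subset[OF SPairs_sub finite_Pairs] by blast

lemma Sset_nbc:
  assumes S: "S \<subseteq> {1..N}" and SS: "Sset N a e t = S"
  shows "no_big_comp S a {p\<in>SPairs S. e p \<le> t}"
proof -
  let ?LT = "links_at N a e t"
  have fx: "isfix (Phi a) e {p\<in>Pairs N. e p \<le> t} ?LT" by (rule links_at_isfix)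
  have finLT: "finite ?LT" by (rule finite_subset[OF _ finite_Pairs]) (use isfix_sub[OF fx] in auto)
  show ?thesis unfolding no_big_comp_def
  proof
    fix i assume i: "i \<in> S"
    have "{p\<in>SPairs S. e p \<le> t} \<subseteq> ?LT"
    proof
      fix p assume p: "p \<in> {p\<in>SPairs S. e p \<le> t}"
      then have pP: "p \<in> {p\<in>Pairs N. e p \<le> t}" using SPairs_sub[OF S] by auto
      have "Phi a {q\<in>?LT. e q < e p} p"
      proof -
        have "fst p \<in> S" "snd p \<in> S" using p by (auto simp: SPairs_def)
        then have "real (card (comp ?LT v)) < a" if "v \<in> {fst p, snd p}" for v
          using that SS by (auto simp: Sset_def)
        moreover have "card (comp {q\<in>?LT. e q < e p} v) \<le> card (comp ?LT v)" for v
          by (intro card_mono comp_finite finLT comp_mono) auto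
        ultimately show ?thesis unfolding Phi_def
          by (meson insertCI le_less_trans of_nat_le_iff)
      qed
      then show "p \<in> ?LT" using isfix_iff[OF fx pP] by blast
    qed
    then have "card (comp {p\<in>SPairs S. e p \<le> t} i) \<le> card (comp ?LT i)"
      by (intro card_mono comp_finite finLT comp_mono)
    moreover have "real (card (comp ?LT i)) < a" using i SS by (auto simp: Sset_def)
    ultimately show "real (card (comp {p\<in>SPairs S. e p \<le> t} i)) < a"
      by (meson le_less_trans of_nat_le_iff)
  qed
qed

lemma invariance:
  assumes S: "S \<subseteq> {1..N}" and SS: "Sset N a e t = S"
    and agree: "\<forall>p \<in> Pairs N - SPairs S. e' p = e p"
    and nbc: "no_big_comp S a {p\<in>SPairs S. e' p \<le> t}"
  shows "Sset N a e' t = S"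
proof -
  let ?LT = "links_at N a e t"
  have fx: "isfix (Phi a) e {p\<in>Pairs N. e p \<le> t} ?LT" by (rule links_at_isfix)
  have finLT: "finite ?LT" by (rule finite_subset[OF _ finite_Pairs]) (use isfix_sub[OF fx] in auto)
  have LTsub: "?LT \<subseteq> Pairs N" "\<And>q. q \<in> ?LT \<Longrightarrow> e q \<le> t" using isfix_sub[OF fx] by auto
  have Sdef: "i \<in> S \<longleftrightarrow> i \<in> {1..N} \<and> real (card (comp ?LT i)) < a" for i
    using SS by (auto simp: Sset_def)
  have respLT: "resp ?LT S"
    unfolding resp_def
  proof
    fix q assume q: "q \<in> ?LT"
    have "snd q \<in> comp ?LT (fst q)" using q unfolding comp_def
      by (metis (no_types, lifting) CollectI Un_iff prod.collapse r_into_rtrancl)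
    then have "comp ?LT (snd q) = comp ?LT (fst q)" by (rule comp_sym_eq)
    moreover have "fst q \<in> {1..N}" "snd q \<in> {1..N}" using q LTsub(1) by (auto simp: Pairs_def)
    ultimately show "fst q \<in> S \<longleftrightarrow> snd q \<in> S" using Sdef by auto
  qed
  define K where "K = {q\<in>?LT. fst q \<notin> S}"
  define G' where "G' = {p\<in>SPairs S. e' p \<le> t}"
  define L' where "L' = K \<union> G'"
  have finG': "finite G'" unfolding G'_def using finite_SPairs[OF S] by simp
  have KnotI: "q \<in> K \<Longrightarrow> q \<notin> SPairs S" for q by (auto simp: K_def SPairs_def)
  have KP: "K \<subseteq> Pairs N" using LTsub by (auto simp: K_def)
  have Ke: "q \<in> K \<Longrightarrow> e' q = e q" for q using agree KnotI KP by blast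
  have respK: "q \<in> K \<Longrightarrow> snd q \<notin> S" for q using respLT by (auto simp: K_def resp_def)
  have respL': "resp L' S" using respK by (auto simp: resp_def L'_def K_def G'_def SPairs_def)
  have helper1: "real (card (comp X v)) < a" if "X \<subseteq> L'" "v \<in> S" for X v
  proof -
    have rX: "resp X S" using resp_mono[OF respL' that(1)] .
    have "comp X v = comp {q\<in>X. fst q \<in> S} v" using comp_in[OF rX that(2)] .
    also have "\<dots> \<subseteq> comp G' v" using that(1) by (intro comp_mono) (auto simp: L'_def K_def)
    finally have "card (comp X v) \<le> card (comp G' v)" by (intro card_mono comp_finite finG')
    moreover have "real (card (comp G' v)) < a" using nbc that(2) by (auto simp: no_big_comp_def G'_def)
    ultimately show ?thesis by (meson le_less_trans of_nat_le_iff)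
  qed
  have helper2: "real (card (comp X v)) < a" if "X \<subseteq> ?LT" "v \<in> S" for X v
  proof -
    have "card (comp X v) \<le> card (comp ?LT v)" using that(1) by (intro card_mono comp_finite finLT comp_mono)
    moreover have "real (card (comp ?LT v)) < a" using Sdef that(2) by auto
    ultimately show ?thesis by (meson le_less_trans of_nat_le_iff)
  qed
  have out1: "comp {q\<in>L'. e' q < s} v = comp {q\<in>K. e q < s} v" if "v \<notin> S" for v s
  proof -
    have "comp {q\<in>L'. e' q < s} v = comp {q\<in>{q\<in>L'. e' q < s}. fst q \<notin> S} v"
      by (rule comp_out[OF resp_mono[OF respL'] that]) auto
    also have "{q\<in>{q\<in>L'. e' q < s}. fst q \<notin> S} = {q\<in>K. e q < s}"
      using Ke by (auto simp: L'_def G'_def SPairs_def K_def)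
    finally show ?thesis .
  qed
  have out2: "comp {q\<in>?LT. e q < s} v = comp {q\<in>K. e q < s} v" if "v \<notin> S" for v s
  proof -
    have "comp {q\<in>?LT. e q < s} v = comp {q\<in>{q\<in>?LT. e q < s}. fst q \<notin> S} v"
      by (rule comp_out[OF resp_mono[OF respLT] that]) auto
    also have "{q\<in>{q\<in>?LT. e q < s}. fst q \<notin> S} = {q\<in>K. e q < s}"
      by (auto simp: K_def)
    finally show ?thesis .
  qed
  have fx': "isfix (Phi a) e' {p\<in>Pairs N. e' p \<le> t} L'"
  proof (rule isfixI)
    show "L' \<subseteq> {p\<in>Pairs N. e' p \<le> t}"
      using KP Ke LTsub(2) SPairs_sub[OF S] by (auto simp: L'_def G'_def K_def)
  next
    fix p assume p: "p \<in> {p\<in>Pairs N. e' p \<le> t}"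
    show "p \<in> L' \<longleftrightarrow> Phi a {q\<in>L'. e' q < e' p} p"
    proof (cases "p \<in> SPairs S")
      case True
      then have "p \<in> L'" using p by (auto simp: L'_def G'_def)
      moreover have "fst p \<in> S" "snd p \<in> S" using True by (auto simp: SPairs_def)
      ultimately show ?thesis using helper1[of "{q\<in>L'. e' q < e' p}"] by (auto simp: Phi_def)
    next
      case False
      then have ep: "e' p = e p" using agree p by auto
      have pPt: "p \<in> {p\<in>Pairs N. e p \<le> t}" using p ep by auto
      have "p \<in> L' \<longleftrightarrow> p \<in> ?LT"
      proof
        assume "p \<in> L'" then show "p \<in> ?LT" using False by (auto simp: L'_def K_def G'_def)
      next
        assume pl: "p \<in> ?LT"
        have "fst p \<notin> S"
        proof
          assume "fst p \<in> S"
          then have "snd p \<in> S" using respLT pl by (auto simp: resp_def)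
          moreover have "fst p < snd p" using pl LTsub(1) by (auto simp: Pairs_def)
          ultimately show False using False \<open>fst p \<in> S\<close> by (auto simp: SPairs_def)
        qed
        then show "p \<in> L'" using pl by (auto simp: L'_def K_def)
      qed
      also have "\<dots> \<longleftrightarrow> Phi a {q\<in>?LT. e q < e p} p" using isfix_iff[OF fx pPt] .
      also have "\<dots> \<longleftrightarrow> Phi a {q\<in>L'. e' q < e' p} p"
      proof -
        have "(real (card (comp {q\<in>?LT. e q < e p} v)) < a) \<longleftrightarrow>
              (real (card (comp {q\<in>L'. e' q < e' p} v)) < a)" for v
        proof (cases "v \<in> S")
          case True
          then show ?thesis using helper1[of "{q\<in>L'. e' q < e' p}" v] helper2[of "{q\<in>?LT. e q < e p}" v] by auto
        next
          case False
          then show ?thesis using out1[OF False] out2[OF False] ep by simp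
        qed
        then show ?thesis unfolding Phi_def by blast
      qed
      finally show ?thesis .
    qed
  qed
  have LT': "links_at N a e' t = L'" by (rule links_at_unique[OF fx'])
  show ?thesis
  proof (rule set_eqI)
    fix i
    show "i \<in> Sset N a e' t \<longleftrightarrow> i \<in> S"
    proof (cases "i \<in> S")
      case True
      then show ?thesis using helper1[of L' i] S LT' by (auto simp: Sset_def)
    next
      case False
      have "comp L' i = comp {q\<in>L'. fst q \<notin> S} i" by (rule comp_out[OF respL' False])
      also have "{q\<in>L'. fst q \<notin> S} = K" by (auto simp: L'_def G'_def SPairs_def K_def)
      also have "comp K i = comp {q\<in>?LT. fst q \<notin> S} i" by (simp add: K_def)
      also have "\<dots> = comp ?LT i" by (rule comp_out[OF respLT False, symmetric])
      finally have "comp L' i = comp ?LT i" .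
      then show ?thesis using False Sdef LT' by (auto simp: Sset_def)
    qed
  qed
qed



definition pat :: "nat set \<Rightarrow> real \<Rightarrow> ((nat\<times>nat) \<Rightarrow> real) \<Rightarrow> (nat\<times>nat) set" where
  "pat S t x = {p\<in>SPairs S. x p \<le> t}"

lemma pmf_ER:
  assumes fin: "finite (SPairs S)" and p: "0 \<le> p" "p \<le> 1" and G: "G \<subseteq> SPairs S"
  shows "pmf (ER S p) G = (\<Prod>x\<in>SPairs S. if x \<in> G then p else 1 - p)"
proof -
  define I where "I = SPairs S"
  define M where "M = Pi_pmf I False (\<lambda>_. bernoulli_pmf p)"
  define f where "f = (\<lambda>h. {x\<in>I. h x})"
  define g where "g = (\<lambda>x. x \<in> G)"
  have "pmf (ER S p) G = measure M (f -` {G})" by (simp add: ER_def pmf_map M_def f_def I_def)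
  also have "\<dots> = measure M (f -` {G} \<inter> set_pmf M)" by (simp add: measure_Int_set_pmf)
  also have "f -` {G} \<inter> set_pmf M = {g} \<inter> set_pmf M"
  proof (intro set_eqI iffI)
    fix h assume h: "h \<in> f -` {G} \<inter> set_pmf M"
    then have "\<forall>x. x \<notin> I \<longrightarrow> h x = False" using set_Pi_pmf_subset[of I False] fin
      by (auto simp: M_def I_def)
    moreover have "{x\<in>I. h x} = G" using h by (simp add: f_def)
    ultimately have "h = g" using G unfolding g_def I_def by (auto simp: fun_eq_iff)
    then show "h \<in> {g} \<inter> set_pmf M" using h by simp
  next
    fix h assume "h \<in> {g} \<inter> set_pmf M"
    then show "h \<in> f -` {G} \<inter> set_pmf M" using G by (auto simp: f_def g_def I_def)
  qed
  also have "measure M ({g} \<inter> set_pmf M) = pmf M g"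
    by (simp add: measure_Int_set_pmf measure_pmf_single)
  also have "\<dots> = (\<Prod>x\<in>I. pmf (bernoulli_pmf p) (g x))"
    using G fin by (auto simp: M_def pmf_Pi g_def I_def)
  also have "\<dots> = (\<Prod>x\<in>I. if x \<in> G then p else 1 - p)"
    using p by (intro prod.cong) (auto simp: g_def)
  finally show ?thesis by (simp add: I_def)
qed

lemma prob_ER:
  assumes fin: "finite (SPairs S)"
  shows "measure_pmf.prob (ER S p) {H. Q H} = (\<Sum>G\<in>{G\<in>Pow (SPairs S). Q G}. pmf (ER S p) G)"
proof -
  have sub: "set_pmf (ER S p) \<subseteq> Pow (SPairs S)" by (auto simp: ER_def)
  have "measure_pmf.prob (ER S p) {H. Q H} = measure_pmf.prob (ER S p) ({H. Q H} \<inter> set_pmf (ER S p))"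
    by (simp add: measure_Int_set_pmf)
  also have "{H. Q H} \<inter> set_pmf (ER S p) = {G\<in>Pow (SPairs S). Q G} \<inter> set_pmf (ER S p)"
    using sub by auto
  also have "measure_pmf.prob (ER S p) \<dots> = measure_pmf.prob (ER S p) {G\<in>Pow (SPairs S). Q G}"
    by (simp add: measure_Int_set_pmf)
  also have "\<dots> = (\<Sum>G\<in>{G\<in>Pow (SPairs S). Q G}. pmf (ER S p) G)"
    using fin by (intro measure_measure_pmf_finite) simp
  finally show ?thesis .
qed

definition Mx :: "nat \<Rightarrow> real measure" where
  "Mx N = density lborel (exponential_density (1 / real N))"

lemma Mx_prob: "N > 0 \<Longrightarrow> prob_space (Mx N)"
  unfolding Mx_def by (rule prob_space_exponential_density) simp

lemma space_Mx[simp]: "space (Mx N) = UNIV" by (simp add: Mx_def)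
lemma sets_Mx[simp]: "sets (Mx N) = sets borel" by (simp add: Mx_def)

lemma Mx_le: assumes "N > 0" "t \<ge> 0" shows "measure (Mx N) {..t} = pN N t"
proof -
  have "emeasure (Mx N) {..t} = erlang_CDF 0 (1 / real N) t"
    unfolding Mx_def by (rule emeasure_erlang_density) (use assms in simp)
  then have "measure (Mx N) {..t} = erlang_CDF 0 (1 / real N) t"
    by (simp add: measure_def erlang_CDF_nonneg assms)
  then show ?thesis using assms by (simp add: erlang_CDF_0 pN_def)
qed

lemma Mx_gt: assumes "N > 0" "t \<ge> 0" shows "measure (Mx N) {t<..} = 1 - pN N t"
proof -
  interpret prob_space "Mx N" by (rule Mx_prob) (use assms in simp)
  have "{t<..} = space (Mx N) - {..t}" by auto
  then have "measure (Mx N) {t<..} = 1 - measure (Mx N) {..t}"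
    using prob_compl[of "{..t}"] by simp
  then show ?thesis using Mx_le[OF assms] by simp
qed

definition AG :: "nat set \<Rightarrow> real \<Rightarrow> (nat\<times>nat) set \<Rightarrow> ((nat\<times>nat) \<Rightarrow> real) set" where
  "AG S t G = PiE (SPairs S) (\<lambda>p. if p \<in> G then {..t} else {t<..})"

lemma AG_sets: "finite (SPairs S) \<Longrightarrow> AG S t G \<in> sets (PiM (SPairs S) (\<lambda>_. Mx N))"
  unfolding AG_def by (intro sets_PiM_I_finite) auto

lemma AG_mem: assumes "G \<subseteq> SPairs S" "x \<in> space (PiM (SPairs S) (\<lambda>_. Mx N))"
  shows "x \<in> AG S t G \<longleftrightarrow> pat S t x = G"
  using assms by (auto simp: AG_def pat_def space_PiM PiE_iff)

lemma AG_measure: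
  assumes "N > 0" "t \<ge> 0" "finite (SPairs S)" "G \<subseteq> SPairs S"
  shows "measure (PiM (SPairs S) (\<lambda>_. Mx N)) (AG S t G) = pmf (ER S (pN N t)) G"
proof -
  interpret product_sigma_finite "\<lambda>_::nat\<times>nat. Mx N"
    unfolding product_sigma_finite_def
    using prob_space_imp_sigma_finite[OF Mx_prob[OF assms(1)]] by simp
  have "emeasure (PiM (SPairs S) (\<lambda>_. Mx N)) (AG S t G) =
     (\<Prod>p\<in>SPairs S. emeasure (Mx N) (if p \<in> G then {..t} else {t<..}))"
    unfolding AG_def by (rule emeasure_PiM) (use assms in auto)
  also have "\<dots> = (\<Prod>p\<in>SPairs S. ennreal (if p \<in> G then pN N t else 1 - pN N t))"
  proof (intro prod.cong refl)
    fix p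
    interpret prob_space "Mx N" by (rule Mx_prob) (use assms in simp)
    show "emeasure (Mx N) (if p \<in> G then {..t} else {t<..}) = ennreal (if p \<in> G then pN N t else 1 - pN N t)"
      using Mx_le[OF assms(1,2)] Mx_gt[OF assms(1,2)] by (auto simp: emeasure_eq_measure)
  qed
  also have "\<dots> = ennreal (\<Prod>p\<in>SPairs S. if p \<in> G then pN N t else 1 - pN N t)"
    using assms(2) by (intro prod_ennreal) (auto simp: pN_def)
  finally have "measure (PiM (SPairs S) (\<lambda>_. Mx N)) (AG S t G) = (\<Prod>p\<in>SPairs S. if p \<in> G then pN N t else 1 - pN N t)"
    using assms(2) by (simp add: measure_def prod_nonneg pN_def)
  also have "\<dots> = pmf (ER S (pN N t)) G"
    using assms by (intro pmf_ER[symmetric]) (auto simp: pN_def)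
  finally show ?thesis .
qed

lemma meas_Q:
  assumes "N > 0" "t \<ge> 0" "finite (SPairs S)"
  shows "measure (PiM (SPairs S) (\<lambda>_. Mx N)) {x\<in>space (PiM (SPairs S) (\<lambda>_. Mx N)). Q (pat S t x)}
        = measure_pmf.prob (ER S (pN N t)) {H. Q H}"
proof -
  let ?P = "PiM (SPairs S) (\<lambda>_. Mx N)"
  let ?C = "{G\<in>Pow (SPairs S). Q G}"
  interpret PI: prob_space ?P by (rule prob_space_PiM) (rule Mx_prob[OF assms(1)])
  have "{x\<in>space ?P. Q (pat S t x)} = (\<Union>G\<in>?C. AG S t G)"
  proof (intro set_eqI iffI)
    fix x assume x: "x \<in> {x\<in>space ?P. Q (pat S t x)}"
    have "pat S t x \<subseteq> SPairs S" by (auto simp: pat_def)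
    then show "x \<in> (\<Union>G\<in>?C. AG S t G)" using x AG_mem[of "pat S t x" S x N t] by auto
  next
    fix x assume "x \<in> (\<Union>G\<in>?C. AG S t G)"
    then obtain G where G: "G \<in> ?C" "x \<in> AG S t G" by auto
    have "x \<in> space ?P" using G(2) by (auto simp: AG_def space_PiM)
    then show "x \<in> {x\<in>space ?P. Q (pat S t x)}" using G AG_mem[of G S x N t] by auto
  qed
  then have "measure ?P {x\<in>space ?P. Q (pat S t x)} = measure ?P (\<Union>G\<in>?C. AG S t G)" by simp
  also have "\<dots> = (\<Sum>G\<in>?C. measure ?P (AG S t G))"
  proof (rule PI.finite_measure_finite_Union)
    show "finite ?C" using assms(3) by simp
    show "(\<lambda>G. AG S t G) ` ?C \<subseteq> sets ?P" using AG_sets[OF assms(3)] by auto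
    show "disjoint_family_on (\<lambda>G. AG S t G) ?C"
      unfolding disjoint_family_on_def
    proof (intro ballI impI)
      fix G H assume GH: "G \<in> ?C" "H \<in> ?C" "G \<noteq> H"
      show "AG S t G \<inter> AG S t H = {}"
      proof (rule ccontr)
        assume "AG S t G \<inter> AG S t H \<noteq> {}"
        then obtain x where x: "x \<in> AG S t G" "x \<in> AG S t H" by auto
        have "x \<in> space ?P" using x(1) by (auto simp: AG_def space_PiM)
        then show False using x GH AG_mem[of G S x N t] AG_mem[of H S x N t] by auto
      qed
    qed
  qed
  also have "\<dots> = (\<Sum>G\<in>?C. pmf (ER S (pN N t)) G)"
    using AG_measure[OF assms] by (intro sum.cong) auto
  also have "\<dots> = measure_pmf.prob (ER S (pN N t)) {H. Q H}"
    using prob_ER[OF assms(3)] by simp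
  finally show ?thesis .
qed



lemma Q_union:
  "{x\<in>space (PiM (SPairs S) (\<lambda>_. Mx N)). Q (pat S t x)} = (\<Union>G\<in>{G\<in>Pow (SPairs S). Q G}. AG S t G)"
proof (intro set_eqI iffI)
  fix x assume x: "x \<in> {x\<in>space (PiM (SPairs S) (\<lambda>_. Mx N)). Q (pat S t x)}"
  have "pat S t x \<subseteq> SPairs S" by (auto simp: pat_def)
  then show "x \<in> (\<Union>G\<in>{G\<in>Pow (SPairs S). Q G}. AG S t G)" using x AG_mem[of "pat S t x" S x N t] by auto
next
  fix x assume "x \<in> (\<Union>G\<in>{G\<in>Pow (SPairs S). Q G}. AG S t G)"
  then obtain G where G: "G \<in> {G\<in>Pow (SPairs S). Q G}" "x \<in> AG S t G" by auto
  have "x \<in> space (PiM (SPairs S) (\<lambda>_. Mx N))" using G(2) by (auto simp: AG_def space_PiM)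
  then show "x \<in> {x\<in>space (PiM (SPairs S) (\<lambda>_. Mx N)). Q (pat S t x)}" using G AG_mem[of G S x N t] by auto
qed

lemma Q_sets:
  assumes "finite (SPairs S)"
  shows "{x\<in>space (PiM (SPairs S) (\<lambda>_. Mx N)). Q (pat S t x)} \<in> sets (PiM (SPairs S) (\<lambda>_. Mx N))"
  unfolding Q_union using AG_sets[OF assms] assms by (intro sets.finite_UN) auto

theorem lemma4p1:
  fixes \<alpha> :: "nat \<Rightarrow> real" and N :: nat and t :: real
    and S :: "nat set" and G :: "(nat \<times> nat) set"
  assumes "filterlim \<alpha> at_top sequentially"
    and "(\<lambda>n. \<alpha> n / real n) \<longlonglongrightarrow> 0"
    and "N \<ge> 2"
    and "t \<ge> 0"
    and "S \<subseteq> {1..N}"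
    and "measure (clocks N) {e \<in> space (clocks N). Sset N (\<alpha> N) e t = S} > 0"
    and "G \<subseteq> SPairs S"
  shows "measure (clocks N) {e \<in> space (clocks N). Cgraph N (\<alpha> N) e t = G \<and> Sset N (\<alpha> N) e t = S}
           / measure (clocks N) {e \<in> space (clocks N). Sset N (\<alpha> N) e t = S}
         = measure_pmf.prob (ER S (pN N t)) {H. H = G \<and> no_big_comp S (\<alpha> N) H}
           / measure_pmf.prob (ER S (pN N t)) {H. no_big_comp S (\<alpha> N) H}"
proof -
  define a where "a = \<alpha> N"
  define I where "I = SPairs S"
  define J where "J = Pairs N - I"
  have N0: "N > 0" using assms(3) by simp
  have S: "S \<subseteq> {1..N}" by fact
  have finI: "finite I" unfolding I_def by (rule finite_SPairs[OF S])
  have finJ: "finite J" unfolding J_def using finite_Pairs by simp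
  have IJ: "I \<inter> J = {}" by (auto simp: J_def)
  have IJP: "I \<union> J = Pairs N" using SPairs_sub[OF S] by (auto simp: J_def I_def)
  have clocks: "clocks N = PiM (Pairs N) (\<lambda>_. Mx N)" by (simp add: clocks_def Mx_def)
  define PI where "PI = PiM I (\<lambda>_. Mx N)"
  define PJ where "PJ = PiM J (\<lambda>_. Mx N)"
  define PP where "PP = PiM (Pairs N) (\<lambda>_. Mx N)"
  interpret PS: product_sigma_finite "\<lambda>_::nat\<times>nat. Mx N"
    unfolding product_sigma_finite_def
    using prob_space_imp_sigma_finite[OF Mx_prob[OF N0]] by simp
  interpret PIp: prob_space PI unfolding PI_def by (rule prob_space_PiM) (rule Mx_prob[OF N0])
  interpret PJp: prob_space PJ unfolding PJ_def by (rule prob_space_PiM) (rule Mx_prob[OF N0])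
  have PJsf: "sigma_finite_measure PJ" by (rule prob_space_imp_sigma_finite) (rule PJp.prob_space_axioms)
  have distr: "distr (PI \<Otimes>\<^sub>M PJ) PP (merge I J) = PP"
    using PS.distr_merge[OF IJ finI finJ] IJP by (simp add: PI_def PJ_def PP_def)
  have mmerge: "merge I J \<in> measurable (PI \<Otimes>\<^sub>M PJ) PP"
    using measurable_merge[of I J "\<lambda>_. Mx N"] IJP by (simp add: PI_def PJ_def PP_def)
  define Z where "Z = {e \<in> space PP. Sset N a e t = S}"
  have Zeq: "{e \<in> space (clocks N). Sset N (\<alpha> N) e t = S} = Z" by (simp add: Z_def clocks PP_def a_def)
  have Zpos: "measure PP Z > 0" using assms(6) Zeq clocks by (simp add: PP_def)
  have Zsets: "Z \<in> sets PP" using Zpos measure_notin_sets[of Z PP] by fastforce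
  obtain e0 where e0: "e0 \<in> Z" using Zpos by (metis equals0I measure_empty less_irrefl)
  define x0 where "x0 = restrict e0 I"
  have x0sp: "x0 \<in> space PI" using e0 by (auto simp: x0_def PI_def space_PiM Z_def PP_def)
  have patx0: "pat S t x0 = pat S t e0" by (auto simp: pat_def x0_def I_def)
  have nbc0: "no_big_comp S a (pat S t x0)"
    using Sset_nbc[OF S, of a e0 t] e0 patx0 by (simp add: Z_def pat_def)
  define B where "B = {y \<in> space PJ. merge I J (x0, y) \<in> Z}"
  have Bsets: "B \<in> sets PJ"
  proof -
    have "(\<lambda>y. merge I J (x0, y)) \<in> measurable PJ PP" by (rule measurable_Pair2[OF mmerge x0sp])
    then have "(\<lambda>y. merge I J (x0, y)) -` Z \<inter> space PJ \<in> sets PJ" using Zsets by (rule measurable_sets)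
    then show ?thesis by (simp add: B_def Int_commute Collect_conj_eq vimage_def)
  qed
  have merge_sp: "merge I J (x, y) \<in> space PP" if "x \<in> space PI" "y \<in> space PJ" for x y
    using measurable_space[OF mmerge, of "(x,y)"] that by (simp add: space_pair_measure)
  have pat_merge: "pat S t (merge I J (x, y)) = pat S t x" for x y
    by (auto simp: pat_def merge_def I_def)
  have agree: "\<forall>p\<in>Pairs N - SPairs S. merge I J (x, y) p = merge I J (x', y) p" for x x' y
    by (auto simp: merge_def I_def J_def)
  have char: "merge I J (x, y) \<in> Z \<longleftrightarrow> no_big_comp S a (pat S t x) \<and> y \<in> B"
    if x: "x \<in> space PI" and y: "y \<in> space PJ" for x y
  proof
    assume "merge I J (x, y) \<in> Z"
    then have SS: "Sset N a (merge I J (x, y)) t = S" by (simp add: Z_def)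
    have nbc: "no_big_comp S a (pat S t x)"
      using Sset_nbc[OF S SS] pat_merge[of x y] by (simp add: pat_def)
    have "Sset N a (merge I J (x0, y)) t = S"
      by (rule invariance[OF S SS]) (use agree nbc0 pat_merge[of x0 y] in \<open>auto simp: pat_def\<close>)
    then show "no_big_comp S a (pat S t x) \<and> y \<in> B" using nbc y merge_sp[OF x0sp y]
      by (simp add: B_def Z_def)
  next
    assume h: "no_big_comp S a (pat S t x) \<and> y \<in> B"
    then have SS: "Sset N a (merge I J (x0, y)) t = S" by (simp add: B_def Z_def)
    have "Sset N a (merge I J (x, y)) t = S"
      by (rule invariance[OF S SS]) (use agree h pat_merge[of x y] in \<open>auto simp: pat_def\<close>)
    then show "merge I J (x, y) \<in> Z" using merge_sp[OF x y] by (simp add: Z_def)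
  qed
  have key: "measure PP {e\<in>Z. R (pat S t e)} =
      measure PI {x\<in>space PI. no_big_comp S a (pat S t x) \<and> R (pat S t x)} * measure PJ B" for R
  proof -
    define A where "A = {x\<in>space PI. no_big_comp S a (pat S t x) \<and> R (pat S t x)}"
    have Asets: "A \<in> sets PI" unfolding A_def PI_def I_def
      by (rule Q_sets[OF finite_SPairs[OF S]])
    have ZRsets: "{e\<in>Z. R (pat S t e)} \<in> sets PP"
    proof -
      have rm: "(\<lambda>e. restrict e I) \<in> measurable PP PI"
        unfolding PP_def PI_def using IJP by (intro measurable_restrict_subset) auto
      have "{x\<in>space PI. R (pat S t x)} \<in> sets PI" unfolding PI_def I_def
        by (rule Q_sets[OF finite_SPairs[OF S]])
      then have "(\<lambda>e. restrict e I) -` {x\<in>space PI. R (pat S t x)} \<inter> space PP \<in> sets PP"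
        by (rule measurable_sets[OF rm])
      moreover have "pat S t (restrict e I) = pat S t e" for e by (auto simp: pat_def I_def)
      ultimately have "{e\<in>space PP. R (pat S t e)} \<in> sets PP"
        using measurable_space[OF rm] by (auto simp: vimage_def Int_def elim!: rev_iffD1[OF _ arg_cong[where f="\<lambda>X. X \<in> sets PP"]])
      then have "Z \<inter> {e\<in>space PP. R (pat S t e)} \<in> sets PP" using Zsets by auto
      moreover have "Z \<inter> {e\<in>space PP. R (pat S t e)} = {e\<in>Z. R (pat S t e)}" by (auto simp: Z_def)
      ultimately show ?thesis by simp
    qed
    have "measure PP {e\<in>Z. R (pat S t e)} = measure (distr (PI \<Otimes>\<^sub>M PJ) PP (merge I J)) {e\<in>Z. R (pat S t e)}"
      using distr by simp
    also have "\<dots> = measure (PI \<Otimes>\<^sub>M PJ) (merge I J -` {e\<in>Z. R (pat S t e)} \<inter> space (PI \<Otimes>\<^sub>M PJ))"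
      by (rule measure_distr[OF mmerge ZRsets])
    also have "merge I J -` {e\<in>Z. R (pat S t e)} \<inter> space (PI \<Otimes>\<^sub>M PJ) = A \<times> B"
    proof (intro set_eqI iffI)
      fix z assume z: "z \<in> merge I J -` {e\<in>Z. R (pat S t e)} \<inter> space (PI \<Otimes>\<^sub>M PJ)"
      obtain x y where xy: "z = (x, y)" by force
      have sp: "x \<in> space PI" "y \<in> space PJ" using z xy by (auto simp: space_pair_measure)
      show "z \<in> A \<times> B" using z xy char[OF sp] sp pat_merge[of x y] by (auto simp: A_def)
    next
      fix z assume z: "z \<in> A \<times> B"
      obtain x y where xy: "z = (x, y)" by force
      have sp: "x \<in> space PI" "y \<in> space PJ" using z xy by (auto simp: A_def B_def)
      show "z \<in> merge I J -` {e\<in>Z. R (pat S t e)} \<inter> space (PI \<Otimes>\<^sub>M PJ)"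
        using z xy char[OF sp] sp pat_merge[of x y] by (auto simp: A_def space_pair_measure)
    qed
    also have "measure (PI \<Otimes>\<^sub>M PJ) (A \<times> B) = measure PI A * measure PJ B"
      using sigma_finite_measure.emeasure_pair_measure_Times[OF PJsf Asets Bsets]
      by (simp add: measure_def enn2real_mult)
    finally show ?thesis by (simp add: A_def)
  qed
  have numer: "{e \<in> space (clocks N). Cgraph N (\<alpha> N) e t = G \<and> Sset N (\<alpha> N) e t = S} = {e\<in>Z. pat S t e = G}"
    by (auto simp: Z_def clocks PP_def a_def Cgraph_def pat_def)
  have denom: "Z = {e\<in>Z. True}" by simp
  have mq: "measure PI {x\<in>space PI. Q (pat S t x)} = measure_pmf.prob (ER S (pN N t)) {H. Q H}" for Q
    unfolding PI_def I_def by (rule meas_Q[OF N0 assms(4) finite_SPairs[OF S]])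
  define \<beta> where "\<beta> = measure PJ B"
  have n: "measure (clocks N) {e \<in> space (clocks N). Cgraph N (\<alpha> N) e t = G \<and> Sset N (\<alpha> N) e t = S}
     = measure_pmf.prob (ER S (pN N t)) {H. H = G \<and> no_big_comp S (\<alpha> N) H} * \<beta>"
    unfolding numer using key[of "\<lambda>H. H = G"] mq[of "\<lambda>H. no_big_comp S a H \<and> H = G"]
    by (simp add: clocks PP_def \<beta>_def a_def conj_commute)
  have d: "measure (clocks N) {e \<in> space (clocks N). Sset N (\<alpha> N) e t = S}
     = measure_pmf.prob (ER S (pN N t)) {H. no_big_comp S (\<alpha> N) H} * \<beta>"
    unfolding Zeq using key[of "\<lambda>H. True"] mq[of "\<lambda>H. no_big_comp S a H"]
    by (simp add: clocks PP_def \<beta>_def a_def)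
  have "\<beta> \<noteq> 0" using d assms(6) by auto
  then show ?thesis unfolding n d by simp
qed

end
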